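(* Let $c\in C([0,1])$ with $c>0$ on $[0,1]$, and let $c^*=\max_{[0,1]}c$. For every $s>0$ and all $m_1,m_2\in C^1([0,1])$, $$\big|\lambda(s,m_1)-\lambda(s,m_2)\big|\le c^*\Big(e^{4s\|m_1-m_2\|_{C([0,1])}}-1\Big).$$
   Context: Fix an integer $d\ge1$. For $m\in C^1([0,1])$ and $s>0$, $\lambda(s,m)$ denotes the principal eigenvalue of $-\varphi''-\frac{d-1}{r}\varphi'-2s\,m'(r)\varphi'+c(r)\varphi=\lambda\varphi$ on $(0,1)$, $\varphi'(0)=\varphi'(1)=0$; equivalently $\lambda(s,m)=\min\{\int_0^1 r^{d-1}e^{2sm}(|\varphi'|^2+c\varphi^2)dr:\ \varphi\in H^1((0,1)),\ \int_0^1 r^{d-1}e^{2sm}\varphi^2dr=1\}$. $\|\cdot\|_{C([0,1])}$ is the sup norm. *)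

theory Defs
  imports "HOL-Analysis.Analysis"
begin

definition C1_01 :: "(real \<Rightarrow> real) \<Rightarrow> bool" where
  "C1_01 m \<longleftrightarrow> (\<exists>m'. continuous_on {0..1} m' \<and>
      (\<forall>x\<in>{0..1}. (m has_real_derivative m' x) (at x within {0..1})))"

definition L2_01 :: "(real \<Rightarrow> real) \<Rightarrow> bool" where
  "L2_01 f \<longleftrightarrow> set_borel_measurable lborel {0<..<1} f \<and>
      set_integrable lborel {0<..<1} (\<lambda>x. (f x)\<^sup>2)"

definition test_fun_01 :: "(real \<Rightarrow> real) \<Rightarrow> bool" where
  "test_fun_01 \<psi> \<longleftrightarrow> \<psi> C1_differentiable_on UNIV \<and>
      (\<exists>a b. 0 < a \<and> a \<le> b \<and> b < 1 \<and> (\<forall>x. x \<notin> {a..b} \<longrightarrow> \<psi> x = 0))"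

text \<open>g is a weak derivative of \<phi> on (0,1), and both lie in L^2: \<phi> \<in> H^1((0,1)), \<phi>' = g.\<close>
definition H1_weak_deriv :: "(real \<Rightarrow> real) \<Rightarrow> (real \<Rightarrow> real) \<Rightarrow> bool" where
  "H1_weak_deriv \<phi> g \<longleftrightarrow> L2_01 \<phi> \<and> L2_01 g \<and>
      (\<forall>\<psi>. test_fun_01 \<psi> \<longrightarrow>
         (LINT x:{0<..<1}|lborel. \<phi> x * deriv \<psi> x) = - (LINT x:{0<..<1}|lborel. g x * \<psi> x))"

text \<open>Principal eigenvalue via the variational characterization.\<close>
definition princ_eig :: "nat \<Rightarrow> (real \<Rightarrow> real) \<Rightarrow> real \<Rightarrow> (real \<Rightarrow> real) \<Rightarrow> real" where
  "princ_eig d c s m = Inf {(LINT r:{0<..<1}|lborel. r ^ (d - 1) * exp (2 * s * m r) * ((g r)\<^sup>2 + c r * (\<phi> r)\<^sup>2))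
     | \<phi> g. H1_weak_deriv \<phi> g \<and>
           (LINT r:{0<..<1}|lborel. r ^ (d - 1) * exp (2 * s * m r) * (\<phi> r)\<^sup>2) = 1}"

definition sup_norm_01 :: "(real \<Rightarrow> real) \<Rightarrow> real" where
  "sup_norm_01 f = Sup ((\<lambda>x. \<bar>f x\<bar>) ` {0..1})"

end

theory Submission
  imports Defs
begin

lemma sbm_cont:
  fixes f :: "real \<Rightarrow> real"
  assumes "continuous_on {0..1} f"
  shows "set_borel_measurable lborel {0<..<1::real} f"
proof -
  have c: "continuous_on {0<..<1} f" using assms by (rule continuous_on_subset) auto
  have "(\<lambda>x. indicator {0<..<1::real} x *\<^sub>R f x) \<in> borel_measurable borel"
    using borel_measurable_continuous_on_indicator[OF _ c] by simp
  then show ?thesis unfolding set_borel_measurable_def by simp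
qed

lemma si_cont:
  fixes f :: "real \<Rightarrow> real"
  assumes "continuous_on {0..1} f"
  shows "set_integrable lborel {0<..<1::real} f"
proof -
  have "set_integrable lborel {0..1::real} f"
    unfolding set_integrable_def using assms by (intro borel_integrable_compact) auto
  then show ?thesis by (rule set_integrable_subset) auto
qed

lemma sbm_mult:
  fixes f g :: "real \<Rightarrow> real"
  assumes "set_borel_measurable M S f" "set_borel_measurable M S g"
  shows "set_borel_measurable M S (\<lambda>x. f x * g x)"
proof -
  have "(\<lambda>x. indicator S x *\<^sub>R (f x * g x)) = (\<lambda>x. (indicator S x *\<^sub>R f x) * (indicator S x *\<^sub>R g x))"
    by (auto simp: indicator_def)
  then show ?thesis using assms unfolding set_borel_measurable_def by simp
qed

lemma si_bound:
  fixes f h :: "real \<Rightarrow> real"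
  assumes "set_integrable lborel S f" "set_borel_measurable lborel S h" "\<forall>x\<in>S. \<bar>h x\<bar> \<le> K"
  shows "set_integrable lborel S (\<lambda>x. h x * f x)"
  unfolding set_integrable_def
proof (rule Bochner_Integration.integrable_bound)
  show "integrable lborel (\<lambda>x. \<bar>K\<bar> * (indicator S x *\<^sub>R f x))"
    using assms(1) unfolding set_integrable_def by simp
  have "set_borel_measurable lborel S f"
    using assms(1) unfolding set_integrable_def set_borel_measurable_def by (rule borel_measurable_integrable)
  then show "(\<lambda>x. indicator S x *\<^sub>R (h x * f x)) \<in> borel_measurable lborel"
    using sbm_mult[OF assms(2)] unfolding set_borel_measurable_def by blast
  show "AE x in lborel. norm (indicator S x *\<^sub>R (h x * f x)) \<le> norm (\<bar>K\<bar> * (indicator S x *\<^sub>R f x))"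
  proof (rule AE_I2)
    fix x
    show "norm (indicator S x *\<^sub>R (h x * f x)) \<le> norm (\<bar>K\<bar> * (indicator S x *\<^sub>R f x))"
    proof (cases "x \<in> S")
      case True
      then have "\<bar>h x\<bar> \<le> \<bar>K\<bar>" using assms(3) by force
      then show ?thesis using True by (simp add: abs_mult mult_right_mono)
    qed simp
  qed
qed

lemma cont_bound:
  fixes f :: "real \<Rightarrow> real"
  assumes "continuous_on {0..1} f"
  shows "\<exists>K. \<forall>x\<in>{0..1}. \<bar>f x\<bar> \<le> K"
proof -
  have "compact (f ` {0..1})" using assms by (intro compact_continuous_image) auto
  then have "bounded (f ` {0..1})" by (rule compact_imp_bounded)
  then show ?thesis unfolding bounded_iff by auto
qed

lemma H1_scale:
  assumes "H1_weak_deriv \<phi> g"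
  shows "H1_weak_deriv (\<lambda>x. a * \<phi> x) (\<lambda>x. a * g x)"
proof -
  have L: "L2_01 (\<lambda>x. a * f x)" if "L2_01 f" for f
  proof -
    have "(\<lambda>x. indicator {0<..<1::real} x *\<^sub>R (a * f x)) = (\<lambda>x. a * (indicator {0<..<1::real} x *\<^sub>R f x))"
      by (auto simp: indicator_def)
    then have 1: "set_borel_measurable lborel {0<..<1} (\<lambda>x. a * f x)"
      using that unfolding L2_01_def set_borel_measurable_def by (simp add: borel_measurable_times)
    have "(\<lambda>x. (a * f x)\<^sup>2) = (\<lambda>x. a\<^sup>2 * (f x)\<^sup>2)" by (simp add: power_mult_distrib)
    then have "set_integrable lborel {0<..<1} (\<lambda>x. (a * f x)\<^sup>2)"
      using that unfolding L2_01_def by simp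
    with 1 show ?thesis unfolding L2_01_def by simp
  qed
  show ?thesis
    using assms L unfolding H1_weak_deriv_def
    by (simp add: mult.assoc)
qed

lemma test_int_zero:
  assumes "test_fun_01 \<psi>"
  shows "(LINT x:{0<..<1}|lborel. deriv \<psi> x) = 0"
proof -
  obtain a b where ab: "0 < a" "a \<le> b" "b < 1" "\<forall>x. x \<notin> {a..b} \<longrightarrow> \<psi> x = 0"
    and C1: "\<psi> C1_differentiable_on UNIV"
    using assms unfolding test_fun_01_def by blast
  have dif: "\<forall>x. \<psi> differentiable at x" and cv: "continuous_on UNIV (\<lambda>x. vector_derivative \<psi> (at x))"
    using C1 unfolding C1_differentiable_on_eq by auto
  have D: "(\<psi> has_vector_derivative deriv \<psi> x) (at x)" for x
    using dif DERIV_deriv_iff_real_differentiable has_real_derivative_iff_has_vector_derivative by blast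
  then have "vector_derivative \<psi> (at x) = deriv \<psi> x" for x
    by (rule vector_derivative_at)
  then have cd: "continuous_on UNIV (deriv \<psi>)" using cv by (simp add: fun_eq_iff)
  have "(LBINT x=ereal 0..ereal 1. deriv \<psi> x) = \<psi> 1 - \<psi> 0"
    by (rule interval_integral_FTC_finite)
       (auto intro: continuous_on_subset[OF cd] has_vector_derivative_at_within[OF D])
  also have "\<dots> = 0" using ab by auto
  finally show ?thesis
    unfolding interval_lebesgue_integral_def by simp
qed

lemma H1_const: "H1_weak_deriv (\<lambda>_. k) (\<lambda>_. 0)"
proof -
  have L: "L2_01 (\<lambda>_. k)" for k
    unfolding L2_01_def by (auto intro!: sbm_cont si_cont)
  show ?thesis unfolding H1_weak_deriv_def using L[of k] L[of 0]
    by (simp add: test_int_zero)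
qed

lemma weight_pos:
  fixes m :: "real \<Rightarrow> real"
  assumes "d \<ge> 1" "continuous_on {0..1} m"
  shows "0 < (LINT r:{0<..<1}|lborel. r ^ (d - 1) * exp (2 * s * m r))"
proof -
  have ce: "continuous_on {0..1} (\<lambda>r. exp (2 * s * m r))"
    using assms(2) by (intro continuous_intros)
  obtain x0 where x0: "x0 \<in> {0..1}" "\<forall>y\<in>{0..1}. exp (2 * s * m x0) \<le> exp (2 * s * m y)"
    using continuous_attains_inf[OF _ _ ce] by auto
  define e0 where "e0 = exp (2 * s * m x0)"
  have e0: "e0 > 0" unfolding e0_def by simp
  have F: "((\<lambda>r. r ^ d / real d) has_vector_derivative r ^ (d - 1)) (at r within {0..1})" for r
  proof -
    have "((\<lambda>r. r ^ d / real d) has_real_derivative (real d * r ^ (d - 1)) / real d) (at r within {0..1})"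
      by (auto intro!: derivative_eq_intros)
    then show ?thesis using assms(1)
      by (simp add: has_real_derivative_iff_has_vector_derivative)
  qed
  have "(LBINT r=ereal 0..ereal 1. r ^ (d - 1)) = 1 ^ d / real d - 0 ^ d / real d"
    by (rule interval_integral_FTC_finite) (use F in \<open>auto intro: continuous_intros\<close>)
  then have I: "(LINT r:{0<..<1}|lborel. r ^ (d - 1)) = 1 / real d"
    using assms(1) unfolding interval_lebesgue_integral_def by simp
  have "(LINT r:{0<..<1}|lborel. e0 * r ^ (d - 1)) \<le> (LINT r:{0<..<1}|lborel. r ^ (d - 1) * exp (2 * s * m r))"
  proof (rule set_integral_mono)
    show "set_integrable lborel {0<..<1} (\<lambda>r. e0 * r ^ (d - 1))"
      by (intro si_cont continuous_intros)
    show "set_integrable lborel {0<..<1} (\<lambda>r. r ^ (d - 1) * exp (2 * s * m r))"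
      using assms(2) by (intro si_cont continuous_intros)
    fix r :: real assume r: "r \<in> {0<..<1}"
    then have "e0 \<le> exp (2 * s * m r)" using x0 unfolding e0_def by auto
    moreover have "r ^ (d - 1) \<ge> 0" using r by simp
    ultimately show "e0 * r ^ (d - 1) \<le> r ^ (d - 1) * exp (2 * s * m r)"
      by (metis mult.commute mult_right_mono)
  qed
  moreover have "(LINT r:{0<..<1}|lborel. e0 * r ^ (d - 1)) = e0 / real d"
    using I by simp
  moreover have "e0 / real d > 0" using e0 assms(1) by simp
  ultimately show ?thesis by linarith
qed

lemma vals_nonneg:
  fixes c m \<phi> g :: "real \<Rightarrow> real"
  assumes "\<forall>x\<in>{0<..<1}. c x \<ge> 0"
  shows "0 \<le> (LINT r:{0<..<1}|lborel. r ^ (d - 1) * exp (2 * s * m r) * ((g r)\<^sup>2 + c r * (\<phi> r)\<^sup>2))"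
  unfolding set_lebesgue_integral_def
proof (rule Bochner_Integration.integral_nonneg)
  fix x :: real
  show "0 \<le> indicator {0<..<1} x *\<^sub>R (x ^ (d - 1) * exp (2 * s * m x) * ((g x)\<^sup>2 + c x * (\<phi> x)\<^sup>2))"
  proof (cases "x \<in> {0<..<1}")
    case True
    then have "c x \<ge> 0" "x \<ge> 0" using assms by auto
    then show ?thesis using True by (auto intro!: mult_nonneg_nonneg add_nonneg_nonneg)
  qed simp
qed

lemma bdd_vals:
  fixes c m :: "real \<Rightarrow> real"
  assumes "\<forall>x\<in>{0<..<1}. c x \<ge> 0"
  shows "bdd_below {(LINT r:{0<..<1}|lborel. r ^ (d - 1) * exp (2 * s * m r) * ((g r)\<^sup>2 + c r * (\<phi> r)\<^sup>2))
     | \<phi> g. H1_weak_deriv \<phi> g \<and>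
           (LINT r:{0<..<1}|lborel. r ^ (d - 1) * exp (2 * s * m r) * (\<phi> r)\<^sup>2) = 1}"
  by (rule bdd_belowI[of _ 0]) (use vals_nonneg[OF assms] in blast)

lemma compare:
  fixes d :: nat and c m1 m2 \<phi> g :: "real \<Rightarrow> real" and s \<delta> :: real
  assumes cc: "continuous_on {0..1} c" and cpos: "\<forall>x\<in>{0..1}. c x > 0" and s: "s > 0"
    and c1: "continuous_on {0..1} m1" and c2: "continuous_on {0..1} m2"
    and del: "\<forall>x\<in>{0..1}. \<bar>m1 x - m2 x\<bar> \<le> \<delta>"
    and H: "H1_weak_deriv \<phi> g"
    and N: "(LINT r:{0<..<1}|lborel. r ^ (d - 1) * exp (2 * s * m1 r) * (\<phi> r)\<^sup>2) = 1"
  shows "princ_eig d c s m2 \<le> exp (4 * s * \<delta>) *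
     (LINT r:{0<..<1}|lborel. r ^ (d - 1) * exp (2 * s * m1 r) * ((g r)\<^sup>2 + c r * (\<phi> r)\<^sup>2))"
proof -
  define W1 where "W1 r = r ^ (d - 1) * exp (2 * s * m1 r)" for r
  define W2 where "W2 r = r ^ (d - 1) * exp (2 * s * m2 r)" for r
  define q where "q r = exp (2 * s * (m2 r - m1 r))" for r
  have W2q: "W2 r = q r * W1 r" for r
  proof -
    have "2 * s * m2 r = 2 * s * (m2 r - m1 r) + 2 * s * m1 r" by algebra
    then show ?thesis unfolding W1_def W2_def q_def by (simp add: exp_add)
  qed
  have qb: "exp (- (2 * s * \<delta>)) \<le> q r \<and> q r \<le> exp (2 * s * \<delta>)" if "r \<in> {0<..<1}" for r
  proof -
    have "\<bar>m1 r - m2 r\<bar> \<le> \<delta>" using del that by auto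
    then have "- \<delta> \<le> m2 r - m1 r" "m2 r - m1 r \<le> \<delta>" by auto
    then have "2 * s * (- \<delta>) \<le> 2 * s * (m2 r - m1 r)" "2 * s * (m2 r - m1 r) \<le> 2 * s * \<delta>"
      using s by (intro mult_left_mono; simp)+
    then have "- (2 * s * \<delta>) \<le> 2 * s * (m2 r - m1 r)" "2 * s * (m2 r - m1 r) \<le> 2 * s * \<delta>"
      by simp_all
    then show ?thesis unfolding q_def by simp
  qed
  have W1c: "continuous_on {0..1} W1" unfolding W1_def using c1 by (intro continuous_intros)
  have W2c: "continuous_on {0..1} W2" unfolding W2_def using c2 by (intro continuous_intros)
  have W1n: "W1 r \<ge> 0" "W2 r \<ge> 0" if "r \<in> {0<..<1}" for r
    using that unfolding W1_def W2_def by auto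
  have cn: "c r \<ge> 0" if "r \<in> {0<..<1}" for r proof -
    have "r \<in> {0..1}" using that by auto
    then show ?thesis using cpos by (auto simp: less_imp_le)
  qed
  obtain K1 where K1: "\<forall>x\<in>{0..1}. \<bar>W1 x\<bar> \<le> K1" using cont_bound[OF W1c] by blast
  obtain K2 where K2: "\<forall>x\<in>{0..1}. \<bar>W2 x\<bar> \<le> K2" using cont_bound[OF W2c] by blast
  obtain Kc where Kc: "\<forall>x\<in>{0..1}. \<bar>c x\<bar> \<le> Kc" using cont_bound[OF cc] by blast
  have p2: "set_integrable lborel {0<..<1} (\<lambda>r. (\<phi> r)\<^sup>2)"
    and g2: "set_integrable lborel {0<..<1} (\<lambda>r. (g r)\<^sup>2)"
    using H unfolding H1_weak_deriv_def L2_01_def by auto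
  have iP1: "set_integrable lborel {0<..<1} (\<lambda>r. W1 r * (\<phi> r)\<^sup>2)"
    by (rule si_bound[OF p2 sbm_cont[OF W1c], of K1]) (use K1 in auto)
  have iP2: "set_integrable lborel {0<..<1} (\<lambda>r. W2 r * (\<phi> r)\<^sup>2)"
    by (rule si_bound[OF p2 sbm_cont[OF W2c], of K2]) (use K2 in auto)
  have iG: "set_integrable lborel {0<..<1} (\<lambda>r. (g r)\<^sup>2 + c r * (\<phi> r)\<^sup>2)"
    by (intro set_integral_add(1) g2 si_bound[OF p2 sbm_cont[OF cc], of Kc]) (use Kc in auto)
  have iF1: "set_integrable lborel {0<..<1} (\<lambda>r. W1 r * ((g r)\<^sup>2 + c r * (\<phi> r)\<^sup>2))"
    by (rule si_bound[OF iG sbm_cont[OF W1c], of K1]) (use K1 in auto)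
  have iF2: "set_integrable lborel {0<..<1} (\<lambda>r. W2 r * ((g r)\<^sup>2 + c r * (\<phi> r)\<^sup>2))"
    by (rule si_bound[OF iG sbm_cont[OF W2c], of K2]) (use K2 in auto)
  define N2 where "N2 = (LINT r:{0<..<1}|lborel. W2 r * (\<phi> r)\<^sup>2)"
  define E1 where "E1 = (LINT r:{0<..<1}|lborel. W1 r * ((g r)\<^sup>2 + c r * (\<phi> r)\<^sup>2))"
  define E2 where "E2 = (LINT r:{0<..<1}|lborel. W2 r * ((g r)\<^sup>2 + c r * (\<phi> r)\<^sup>2))"
  have N1: "(LINT r:{0<..<1}|lborel. W1 r * (\<phi> r)\<^sup>2) = 1" using N unfolding W1_def .
  have "(LINT r:{0<..<1}|lborel. exp (- (2 * s * \<delta>)) * (W1 r * (\<phi> r)\<^sup>2)) \<le> N2"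
    unfolding N2_def
  proof (rule set_integral_mono)
    show "set_integrable lborel {0<..<1} (\<lambda>r. exp (- (2 * s * \<delta>)) * (W1 r * (\<phi> r)\<^sup>2))"
      using iP1 by simp
    show "set_integrable lborel {0<..<1} (\<lambda>r. W2 r * (\<phi> r)\<^sup>2)" by (rule iP2)
    fix r :: real assume r: "r \<in> {0<..<1}"
    have "0 \<le> W1 r * (\<phi> r)\<^sup>2" using W1n[OF r] by simp
    then have "exp (- (2 * s * \<delta>)) * (W1 r * (\<phi> r)\<^sup>2) \<le> q r * (W1 r * (\<phi> r)\<^sup>2)"
      using qb[OF r] by (intro mult_right_mono) auto
    then show "exp (- (2 * s * \<delta>)) * (W1 r * (\<phi> r)\<^sup>2) \<le> W2 r * (\<phi> r)\<^sup>2"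
      by (simp add: W2q mult.assoc)
  qed
  then have N2ge: "exp (- (2 * s * \<delta>)) \<le> N2" using N1 by simp
  have N2pos: "N2 > 0" using N2ge by (smt (verit) exp_gt_zero)
  have "E2 \<le> (LINT r:{0<..<1}|lborel. exp (2 * s * \<delta>) * (W1 r * ((g r)\<^sup>2 + c r * (\<phi> r)\<^sup>2)))"
    unfolding E2_def
  proof (rule set_integral_mono)
    show "set_integrable lborel {0<..<1} (\<lambda>r. exp (2 * s * \<delta>) * (W1 r * ((g r)\<^sup>2 + c r * (\<phi> r)\<^sup>2)))"
      using iF1 by simp
    show "set_integrable lborel {0<..<1} (\<lambda>r. W2 r * ((g r)\<^sup>2 + c r * (\<phi> r)\<^sup>2))" by (rule iF2)
    fix r :: real assume r: "r \<in> {0<..<1}"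
    have "0 \<le> W1 r * ((g r)\<^sup>2 + c r * (\<phi> r)\<^sup>2)" using W1n[OF r] cn[OF r] by simp
    then have "q r * (W1 r * ((g r)\<^sup>2 + c r * (\<phi> r)\<^sup>2)) \<le> exp (2 * s * \<delta>) * (W1 r * ((g r)\<^sup>2 + c r * (\<phi> r)\<^sup>2))"
      using qb[OF r] by (intro mult_right_mono) auto
    then show "W2 r * ((g r)\<^sup>2 + c r * (\<phi> r)\<^sup>2) \<le> exp (2 * s * \<delta>) * (W1 r * ((g r)\<^sup>2 + c r * (\<phi> r)\<^sup>2))"
      by (simp add: W2q mult.assoc)
  qed
  then have E2le: "E2 \<le> exp (2 * s * \<delta>) * E1" unfolding E1_def by simp
  have E2nn: "E2 \<ge> 0" unfolding E2_def W2_def using vals_nonneg[of c d s m2 g \<phi>] cn by simp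
  define a where "a = 1 / sqrt N2"
  have a2: "a\<^sup>2 = 1 / N2" unfolding a_def using N2pos by (simp add: power_divide)
  have H': "H1_weak_deriv (\<lambda>x. a * \<phi> x) (\<lambda>x. a * g x)" by (rule H1_scale[OF H])
  have "(LINT r:{0<..<1}|lborel. r ^ (d - 1) * exp (2 * s * m2 r) * (a * \<phi> r)\<^sup>2)
      = (LINT r:{0<..<1}|lborel. a\<^sup>2 * (W2 r * (\<phi> r)\<^sup>2))"
    unfolding W2_def by (simp add: power_mult_distrib mult_ac)
  also have "\<dots> = 1" using a2 N2pos unfolding N2_def by simp
  finally have N': "(LINT r:{0<..<1}|lborel. r ^ (d - 1) * exp (2 * s * m2 r) * (a * \<phi> r)\<^sup>2) = 1" .
  have "(LINT r:{0<..<1}|lborel. r ^ (d - 1) * exp (2 * s * m2 r) * ((a * g r)\<^sup>2 + c r * (a * \<phi> r)\<^sup>2))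
      = (LINT r:{0<..<1}|lborel. a\<^sup>2 * (W2 r * ((g r)\<^sup>2 + c r * (\<phi> r)\<^sup>2)))"
    unfolding W2_def by (simp add: power_mult_distrib algebra_simps)
  also have "\<dots> = E2 / N2" using a2 unfolding E2_def by simp
  finally have E': "(LINT r:{0<..<1}|lborel. r ^ (d - 1) * exp (2 * s * m2 r) * ((a * g r)\<^sup>2 + c r * (a * \<phi> r)\<^sup>2)) = E2 / N2" .
  have "princ_eig d c s m2 \<le> E2 / N2"
    unfolding princ_eig_def
    by (rule cInf_lower[OF _ bdd_vals], (use H' N' E' in force), use cn in auto)
  also have "E2 / N2 \<le> E2 * exp (2 * s * \<delta>)"
  proof -
    have "1 / N2 \<le> exp (2 * s * \<delta>)"
      using N2ge N2pos by (simp add: exp_minus field_simps)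
    then show ?thesis using E2nn by (metis mult_left_mono times_divide_eq_right mult_1_right)
  qed
  also have "\<dots> \<le> exp (2 * s * \<delta>) * E1 * exp (2 * s * \<delta>)"
    using E2le by (intro mult_right_mono) auto
  also have "\<dots> = exp (4 * s * \<delta>) * E1"
    by (simp add: exp_add[symmetric])
  finally show ?thesis unfolding E1_def W1_def .
qed

lemma const_elem:
  fixes d :: nat and c m :: "real \<Rightarrow> real" and s C :: real
  assumes d: "d \<ge> 1" and cc: "continuous_on {0..1} c" and cC: "\<forall>x\<in>{0..1}. c x \<le> C"
    and cm: "continuous_on {0..1} m"
  shows "\<exists>\<phi> g. H1_weak_deriv \<phi> g \<and>
           (LINT r:{0<..<1}|lborel. r ^ (d - 1) * exp (2 * s * m r) * (\<phi> r)\<^sup>2) = 1 \<and>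
           (LINT r:{0<..<1}|lborel. r ^ (d - 1) * exp (2 * s * m r) * ((g r)\<^sup>2 + c r * (\<phi> r)\<^sup>2)) \<le> C"
proof -
  define I where "I = (LINT r:{0<..<1}|lborel. r ^ (d - 1) * exp (2 * s * m r))"
  have Ipos: "I > 0" unfolding I_def by (rule weight_pos[OF d cm])
  define k where "k = 1 / sqrt I"
  have k2: "k\<^sup>2 = 1 / I" unfolding k_def using Ipos by (simp add: power_divide)
  have N: "(LINT r:{0<..<1}|lborel. r ^ (d - 1) * exp (2 * s * m r) * k\<^sup>2) = 1"
    using k2 Ipos unfolding I_def by simp
  have "(LINT r:{0<..<1}|lborel. r ^ (d - 1) * exp (2 * s * m r) * (0\<^sup>2 + c r * k\<^sup>2))
      \<le> (LINT r:{0<..<1}|lborel. r ^ (d - 1) * exp (2 * s * m r) * k\<^sup>2 * C)"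
  proof (rule set_integral_mono)
    show "set_integrable lborel {0<..<1} (\<lambda>r. r ^ (d - 1) * exp (2 * s * m r) * (0\<^sup>2 + c r * k\<^sup>2))"
      using cm cc by (intro si_cont continuous_intros)
    show "set_integrable lborel {0<..<1} (\<lambda>r. r ^ (d - 1) * exp (2 * s * m r) * k\<^sup>2 * C)"
      using cm by (intro si_cont continuous_intros)
    fix r :: real assume r: "r \<in> {0<..<1}"
    then have "c r \<le> C" using cC by auto
    moreover have "0 \<le> r ^ (d - 1) * exp (2 * s * m r) * k\<^sup>2" using r by auto
    ultimately have "r ^ (d - 1) * exp (2 * s * m r) * k\<^sup>2 * c r \<le> r ^ (d - 1) * exp (2 * s * m r) * k\<^sup>2 * C"
      by (rule mult_left_mono)
    then show "r ^ (d - 1) * exp (2 * s * m r) * (0\<^sup>2 + c r * k\<^sup>2) \<le> r ^ (d - 1) * exp (2 * s * m r) * k\<^sup>2 * C"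
      by (simp add: mult_ac)
  qed
  also have "\<dots> = C" using N by simp
  finally show ?thesis using H1_const[of k] N by force
qed

lemma C1_cont: "C1_01 m \<Longrightarrow> continuous_on {0..1} m"
  unfolding C1_01_def continuous_on_eq_continuous_within using DERIV_continuous by blast

lemma abs_sup_bound:
  fixes f :: "real \<Rightarrow> real"
  assumes "continuous_on {0..1} f" "x \<in> {0..1}"
  shows "\<bar>f x\<bar> \<le> sup_norm_01 f"
proof -
  have "continuous_on {0..1} (\<lambda>x. \<bar>f x\<bar>)" using assms(1) by (intro continuous_intros)
  then obtain K where "\<forall>x\<in>{0..1}. \<bar>\<bar>f x\<bar>\<bar> \<le> K" using cont_bound by blast
  then have "bdd_above ((\<lambda>x. \<bar>f x\<bar>) ` {0..1})" by (auto intro!: bdd_aboveI[of _ K])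
  then show ?thesis unfolding sup_norm_01_def using assms(2) by (intro cSup_upper) auto
qed

lemma one_dir:
  fixes d :: nat and c m1 m2 :: "real \<Rightarrow> real" and s \<delta> C :: real
  assumes d: "d \<ge> 1" and cc: "continuous_on {0..1} c" and cpos: "\<forall>x\<in>{0..1}. c x > 0" and s: "s > 0"
    and cC: "\<forall>x\<in>{0..1}. c x \<le> C"
    and c1: "continuous_on {0..1} m1" and c2: "continuous_on {0..1} m2"
    and del: "\<forall>x\<in>{0..1}. \<bar>m1 x - m2 x\<bar> \<le> \<delta>"
  shows "princ_eig d c s m2 - princ_eig d c s m1 \<le> C * (exp (4 * s * \<delta>) - 1)"
proof -
  have cn: "\<forall>x\<in>{0<..<1}. c x \<ge> 0" using cpos by (auto simp: less_imp_le)
  let ?S = "{(LINT r:{0<..<1}|lborel. r ^ (d - 1) * exp (2 * s * m1 r) * ((g r)\<^sup>2 + c r * (\<phi> r)\<^sup>2))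
     | \<phi> g. H1_weak_deriv \<phi> g \<and>
           (LINT r:{0<..<1}|lborel. r ^ (d - 1) * exp (2 * s * m1 r) * (\<phi> r)\<^sup>2) = 1}"
  obtain v where v: "v \<in> ?S" "v \<le> C" using const_elem[OF d cc cC c1, of s] by blast
  have ne: "?S \<noteq> {}" using v by blast
  have l1C: "princ_eig d c s m1 \<le> C"
    unfolding princ_eig_def using cInf_lower[OF v(1) bdd_vals[OF cn]] v(2) by linarith
  have l1nn: "princ_eig d c s m1 \<ge> 0"
    unfolding princ_eig_def by (rule cInf_greatest[OF ne]) (use vals_nonneg[OF cn] in blast)
  have dnn: "\<delta> \<ge> 0" using del by (meson abs_ge_zero atLeastAtMost_iff order_trans zero_le_one order_refl)
  have E: "exp (4 * s * \<delta>) \<ge> 1" using dnn s by simp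
  have "princ_eig d c s m2 / exp (4 * s * \<delta>) \<le> princ_eig d c s m1"
    unfolding princ_eig_def[of d c s m1]
  proof (rule cInf_greatest[OF ne])
    fix x assume "x \<in> ?S"
    then obtain \<phi> g where H: "H1_weak_deriv \<phi> g"
      and N: "(LINT r:{0<..<1}|lborel. r ^ (d - 1) * exp (2 * s * m1 r) * (\<phi> r)\<^sup>2) = 1"
      and x: "x = (LINT r:{0<..<1}|lborel. r ^ (d - 1) * exp (2 * s * m1 r) * ((g r)\<^sup>2 + c r * (\<phi> r)\<^sup>2))"
      by blast
    have "princ_eig d c s m2 \<le> exp (4 * s * \<delta>) * x"
      unfolding x by (rule compare[OF cc cpos s c1 c2 del H N])
    then show "princ_eig d c s m2 / exp (4 * s * \<delta>) \<le> x"
      by (simp add: divide_le_eq mult.commute)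
  qed
  then have "princ_eig d c s m2 \<le> exp (4 * s * \<delta>) * princ_eig d c s m1"
    by (simp add: divide_le_eq mult.commute)
  then have "princ_eig d c s m2 - princ_eig d c s m1 \<le> (exp (4 * s * \<delta>) - 1) * princ_eig d c s m1"
    by (simp add: algebra_simps)
  also have "\<dots> \<le> (exp (4 * s * \<delta>) - 1) * C"
    using E l1C by (intro mult_left_mono) auto
  finally show ?thesis by (simp add: mult.commute)
qed

theorem lemma4p1:
  fixes d :: nat and c m1 m2 :: "real \<Rightarrow> real" and s :: real
  assumes "d \<ge> 1"
    and "continuous_on {0..1} c" and "\<forall>x\<in>{0..1}. c x > 0"
    and "s > 0"
    and "C1_01 m1" and "C1_01 m2"
  shows "\<bar>princ_eig d c s m1 - princ_eig d c s m2\<bar>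
           \<le> Sup (c ` {0..1}) * (exp (4 * s * sup_norm_01 (\<lambda>x. m1 x - m2 x)) - 1)"
proof -
  have c1: "continuous_on {0..1} m1" and c2: "continuous_on {0..1} m2"
    using assms(5,6) by (auto intro: C1_cont)
  have cd: "continuous_on {0..1} (\<lambda>x. m1 x - m2 x)" using c1 c2 by (intro continuous_intros)
  define \<delta> where "\<delta> = sup_norm_01 (\<lambda>x. m1 x - m2 x)"
  have del: "\<forall>x\<in>{0..1}. \<bar>m1 x - m2 x\<bar> \<le> \<delta>"
    unfolding \<delta>_def using abs_sup_bound[OF cd] by blast
  have del': "\<forall>x\<in>{0..1}. \<bar>m2 x - m1 x\<bar> \<le> \<delta>" using del by (simp add: abs_minus_commute)
  obtain K where "\<forall>x\<in>{0..1}. \<bar>c x\<bar> \<le> K" using cont_bound[OF assms(2)] by blast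
  then have "bdd_above (c ` {0..1})" by (auto intro!: bdd_aboveI[of _ K])
  then have cC: "\<forall>x\<in>{0..1}. c x \<le> Sup (c ` {0..1})" by (auto intro: cSup_upper)
  have A: "princ_eig d c s m2 - princ_eig d c s m1 \<le> Sup (c ` {0..1}) * (exp (4 * s * \<delta>) - 1)"
    by (rule one_dir[OF assms(1-4) cC c1 c2 del])
  have B: "princ_eig d c s m1 - princ_eig d c s m2 \<le> Sup (c ` {0..1}) * (exp (4 * s * \<delta>) - 1)"
    by (rule one_dir[OF assms(1-4) cC c2 c1 del'])
  show ?thesis using A B unfolding \<delta>_def by linarith
qed

end
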